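(* Let $\{\mathcal{K}^s:s\geq0\}$ be a strongly continuous one-parameter semigroup of isometries on a complex Hilbert space $\mathcal{H}$. Let $k\in\mathbb{N}$, let $x_1,\dots,x_k\in\mathbb{R}$ be pairwise distinct, let $v_1,\dots,v_k\in\mathcal{H}$ be orthonormal with $\mathcal{K}^sv_j=e^{isx_j}v_j$ for all $s\geq0$ and all $j$, and let $h=\sum_{j=1}^k a_jv_j$ with $a_j\in\mathbb{C}$ and $|a_1|\geq|a_2|\geq\cdots\geq|a_k|$. Then for each $i=1,\dots,k$, $$\lim_{\tau\to\infty}\lambda_{h,\tau,i}=|a_i|^2 .$$
   Context: A strongly continuous one-parameter semigroup of isometries means: each $\mathcal{K}^s$ is a linear isometry, $\mathcal{K}^0=I$, $\mathcal{K}^{s_1}\mathcal{K}^{s_2}=\mathcal{K}^{s_1+s_2}$, and $s\mapsto\mathcal{K}^sh$ is norm-continuous for each $h$. Inner products are linear in the first argument. For $h\in\mathcal{H}$ and $\tau>0$, $A_{h,\tau}$ is the operator on $L^2([0,\tau])$ defined by $(A_{h,\tau}g)(t)=\frac1\tau\int_0^\tau g(s)\langle\mathcal{K}^sh,\mathcal{K}^th\rangle\,ds$; it is a positive semidefinite self-adjoint compact operator, and $\lambda_{h,\tau,1}\geq\lambda_{h,\tau,2}\geq\cdots$ denote its eigenvalues in descending order counted with multiplicity, i.e. $\lambda_{h,\tau,i}=\sup_{\dim\mathcal{M}=i}\min_{0\neq g\in\mathcal{M}}\langle A_{h,\tau}g,g\rangle/\|g\|^2$. *)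

theory Defs
  imports "HOL-Analysis.Analysis"
begin

definition hnorm :: "('h \<Rightarrow> 'h \<Rightarrow> complex) \<Rightarrow> 'h \<Rightarrow> real" where
  "hnorm ip x = sqrt (Re (ip x x))"

definition complex_hilbert_space ::
  "(complex \<Rightarrow> 'h::ab_group_add \<Rightarrow> 'h) \<Rightarrow> ('h \<Rightarrow> 'h \<Rightarrow> complex) \<Rightarrow> bool" where
  "complex_hilbert_space sc ip \<longleftrightarrow>
     (\<forall>a x y. sc a (x + y) = sc a x + sc a y) \<and>
     (\<forall>a b x. sc (a + b) x = sc a x + sc b x) \<and>
     (\<forall>a b x. sc (a * b) x = sc a (sc b x)) \<and>
     (\<forall>x. sc 1 x = x) \<and>
     (\<forall>x y z. ip (x + y) z = ip x z + ip y z) \<and>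
     (\<forall>a x y. ip (sc a x) y = a * ip x y) \<and>
     (\<forall>x y. ip y x = cnj (ip x y)) \<and>
     (\<forall>x. Re (ip x x) \<ge> 0) \<and>
     (\<forall>x. ip x x = 0 \<longrightarrow> x = 0) \<and>
     (\<forall>X::nat \<Rightarrow> 'h. (\<forall>e>0. \<exists>N. \<forall>m\<ge>N. \<forall>n\<ge>N. hnorm ip (X m - X n) < e)
        \<longrightarrow> (\<exists>L. (\<lambda>n. hnorm ip (X n - L)) \<longlonglongrightarrow> 0))"

definition sc_isometry_semigroup ::
  "(complex \<Rightarrow> 'h::ab_group_add \<Rightarrow> 'h) \<Rightarrow> ('h \<Rightarrow> 'h \<Rightarrow> complex) \<Rightarrow> (real \<Rightarrow> 'h \<Rightarrow> 'h) \<Rightarrow> bool" where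
  "sc_isometry_semigroup sc ip K \<longleftrightarrow>
     (\<forall>s\<ge>0. \<forall>x y. K s (x + y) = K s x + K s y) \<and>
     (\<forall>s\<ge>0. \<forall>a x. K s (sc a x) = sc a (K s x)) \<and>
     (\<forall>s\<ge>0. \<forall>x. hnorm ip (K s x) = hnorm ip x) \<and>
     (\<forall>x. K 0 x = x) \<and>
     (\<forall>s1\<ge>0. \<forall>s2\<ge>0. \<forall>x. K s1 (K s2 x) = K (s1 + s2) x) \<and>
     (\<forall>x. \<forall>s0\<ge>0. ((\<lambda>s. hnorm ip (K s x - K s0 x)) \<longlongrightarrow> 0) (at s0 within {0..}))"

definition L2 :: "real \<Rightarrow> (real \<Rightarrow> complex) \<Rightarrow> bool" where
  "L2 \<tau> g \<longleftrightarrow> g \<in> borel_measurable (lebesgue_on {0..\<tau>}) \<and>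
                integrable (lebesgue_on {0..\<tau>}) (\<lambda>s. (cmod (g s))\<^sup>2)"

definition L2norm2 :: "real \<Rightarrow> (real \<Rightarrow> complex) \<Rightarrow> real" where
  "L2norm2 \<tau> g = integral\<^sup>L (lebesgue_on {0..\<tau>}) (\<lambda>s. (cmod (g s))\<^sup>2)"

definition A_op :: "('h \<Rightarrow> 'h \<Rightarrow> complex) \<Rightarrow> (real \<Rightarrow> 'h \<Rightarrow> 'h) \<Rightarrow> 'h \<Rightarrow> real
                    \<Rightarrow> (real \<Rightarrow> complex) \<Rightarrow> real \<Rightarrow> complex" where
  "A_op ip K h \<tau> g t =
     (1 / complex_of_real \<tau>) * integral\<^sup>L (lebesgue_on {0..\<tau>}) (\<lambda>s. g s * ip (K s h) (K t h))"

definition A_form :: "('h \<Rightarrow> 'h \<Rightarrow> complex) \<Rightarrow> (real \<Rightarrow> 'h \<Rightarrow> 'h) \<Rightarrow> 'h \<Rightarrow> real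
                    \<Rightarrow> (real \<Rightarrow> complex) \<Rightarrow> real" where
  "A_form ip K h \<tau> g =
     Re (integral\<^sup>L (lebesgue_on {0..\<tau>}) (\<lambda>t. A_op ip K h \<tau> g t * cnj (g t)))"

text \<open>i-th eigenvalue (descending, with multiplicity), via Courant--Fischer:
  sup over i-dimensional subspaces M of L^2 (spanned by i L^2-linearly independent
  functions g 0, ..., g (i-1)) of the min of the Rayleigh quotient over nonzero elements of M.\<close>

definition eigval :: "('h \<Rightarrow> 'h \<Rightarrow> complex) \<Rightarrow> (real \<Rightarrow> 'h \<Rightarrow> 'h) \<Rightarrow> 'h \<Rightarrow> real \<Rightarrow> nat \<Rightarrow> real" where
  "eigval ip K h \<tau> i =
     Sup { (INF c \<in> {c :: nat \<Rightarrow> complex. \<exists>j<i. c j \<noteq> 0}.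
              A_form ip K h \<tau> (\<lambda>s. \<Sum>j<i. c j * g j s) / L2norm2 \<tau> (\<lambda>s. \<Sum>j<i. c j * g j s))
          | g :: nat \<Rightarrow> real \<Rightarrow> complex.
              (\<forall>j<i. L2 \<tau> (g j)) \<and>
              (\<forall>c :: nat \<Rightarrow> complex. L2norm2 \<tau> (\<lambda>s. \<Sum>j<i. c j * g j s) = 0 \<longrightarrow> (\<forall>j<i. c j = 0)) }"

end

theory Submission
  imports Defs
begin

definition ee :: "real \<Rightarrow> real \<Rightarrow> complex" where
  "ee y s = exp (\<i> * complex_of_real (s * y))"

lemma ee_deriv: "y \<noteq> 0 \<Longrightarrow> ((\<lambda>s. ee y s / (\<i> * of_real y)) has_vector_derivative ee y s) (at s within S)"
proof -
  assume y: "y \<noteq> 0"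
  have "((\<lambda>z. exp (\<i> * (z * of_real y)) / (\<i> * of_real y)) has_field_derivative exp (\<i> * (of_real s * of_real y))) (at (of_real s))"
    using y by (auto intro!: derivative_eq_intros) (simp add: algebra_simps)
  from has_vector_derivative_real_field[OF this] show ?thesis by (simp add: ee_def)
qed

lemma ee_cont[continuous_intros]: "continuous_on S (ee y)"
  unfolding ee_def by (intro continuous_intros)

lemma norm_ee[simp]: "cmod (ee y s) = 1"
  unfolding ee_def by (simp add: norm_exp_eq_Re)

lemma ee_int_eq: assumes "y \<noteq> 0" "0 \<le> \<tau>"
  shows "integral\<^sup>L (lebesgue_on {0..\<tau>}) (ee y) = (ee y \<tau> - ee y 0) / (\<i> * of_real y)"
proof -
  have "(ee y has_integral (ee y \<tau> / (\<i> * of_real y) - ee y 0 / (\<i> * of_real y))) {0..\<tau>}"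
    using assms by (intro fundamental_theorem_of_calculus ee_deriv) auto
  moreover have "integral\<^sup>L (lebesgue_on {0..\<tau>}) (ee y) = integral {0..\<tau>} (ee y)"
    by (intro lebesgue_integral_eq_integral continuous_imp_integrable_real continuous_intros) auto
  ultimately show ?thesis by (simp add: integral_unique diff_divide_distrib)
qed

lemma ee_int_bound: assumes "y \<noteq> 0" "0 \<le> \<tau>"
  shows "cmod (integral\<^sup>L (lebesgue_on {0..\<tau>}) (ee y)) \<le> 2 / \<bar>y\<bar>"
proof -
  have "cmod (ee y \<tau> - ee y 0) \<le> 2" using norm_triangle_ineq4[of "ee y \<tau>" "ee y 0"] by simp
  then show ?thesis using assms by (simp add: ee_int_eq norm_divide norm_mult divide_right_mono)
qed

lemma ee_int_0: assumes "0 \<le> \<tau>"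
  shows "integral\<^sup>L (lebesgue_on {0..\<tau>}) (ee 0) = of_real \<tau>"
proof -
  have e: "ee 0 = (\<lambda>_. 1)" by (auto simp: ee_def fun_eq_iff)
  have "integral\<^sup>L (lebesgue_on {0..\<tau>}) (\<lambda>_. 1::complex) = integral {0..\<tau>} (\<lambda>_. 1)"
    by (intro lebesgue_integral_eq_integral continuous_imp_integrable_real continuous_intros) auto
  also have "integral {0..\<tau>} (\<lambda>_. 1::complex) = of_real \<tau>" using assms by (simp add: scaleR_conv_of_real)
  finally show ?thesis by (simp add: e)
qed


abbreviation "MM \<tau> \<equiv> lebesgue_on {0..\<tau>::real}"

lemma fin_MM: "finite_measure (MM \<tau>)"
  by (intro finite_measure_lebesgue_on) auto

lemma ee_meas[measurable]: "ee y \<in> borel_measurable (MM \<tau>)"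
  by (intro continuous_imp_measurable_on_sets_lebesgue continuous_intros) auto

lemma L2_integrable: assumes "L2 \<tau> f" shows "integrable (MM \<tau>) f"
proof -
  have m: "f \<in> borel_measurable (MM \<tau>)" and i: "integrable (MM \<tau>) (\<lambda>s. (cmod (f s))\<^sup>2)"
    using assms by (auto simp: L2_def)
  have "integrable (MM \<tau>) (\<lambda>s. 1 + (cmod (f s))\<^sup>2)"
    by (rule Bochner_Integration.integrable_add[OF finite_measure.integrable_const[OF fin_MM] i])
  then show ?thesis
  proof (rule Bochner_Integration.integrable_bound)
    show "AE x in MM \<tau>. norm (f x) \<le> norm (1 + (cmod (f x))\<^sup>2)"
    proof (intro AE_I2)
      fix x have "cmod (f x) \<le> 1 + (cmod (f x))\<^sup>2"
        using zero_le_power2[of "cmod (f x) - 1"] norm_ge_zero[of "f x"] unfolding power2_diff power_one mult_1_right by linarith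
      then show "norm (f x) \<le> norm (1 + (cmod (f x))\<^sup>2)" by simp
    qed
  qed (rule m)
qed

lemma int_mult_ee: assumes "integrable (MM \<tau>) f" shows "integrable (MM \<tau>) (\<lambda>s. f s * ee y s)"
proof -
  have i: "integrable (MM \<tau>) (\<lambda>s. norm (f s))" using assms by auto
  have m: "(\<lambda>s. f s * ee y s) \<in> borel_measurable (MM \<tau>)"
      using borel_measurable_integrable[OF assms] by measurable
  show ?thesis
    by (rule Bochner_Integration.integrable_bound[OF i m]) (auto simp: norm_mult)
qed

lemma L2_ee: "L2 \<tau> (ee y)"
  unfolding L2_def by (auto intro!: finite_measure.integrable_const[OF fin_MM])

lemma L2_zero: "L2 \<tau> (\<lambda>_. 0)"
  unfolding L2_def by auto

lemma L2_cmult: "L2 \<tau> f \<Longrightarrow> L2 \<tau> (\<lambda>s. c * f s)"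
  unfolding L2_def by (auto simp: norm_mult power_mult_distrib)

lemma L2_add: assumes "L2 \<tau> f" "L2 \<tau> g" shows "L2 \<tau> (\<lambda>s. f s + g s)"
proof -
  have m: "f \<in> borel_measurable (MM \<tau>)" "g \<in> borel_measurable (MM \<tau>)"
    and i: "integrable (MM \<tau>) (\<lambda>s. (cmod (f s))\<^sup>2)" "integrable (MM \<tau>) (\<lambda>s. (cmod (g s))\<^sup>2)"
    using assms by (auto simp: L2_def)
  have "integrable (MM \<tau>) (\<lambda>s. 2 * (cmod (f s))\<^sup>2 + 2 * (cmod (g s))\<^sup>2)"
    using i by auto
  then have "integrable (MM \<tau>) (\<lambda>s. (cmod (f s + g s))\<^sup>2)"
  proof (rule Bochner_Integration.integrable_bound)
    show "(\<lambda>s. (cmod (f s + g s))\<^sup>2) \<in> borel_measurable (MM \<tau>)" using m by measurable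
    show "AE x in MM \<tau>. norm ((cmod (f x + g x))\<^sup>2) \<le> norm (2 * (cmod (f x))\<^sup>2 + 2 * (cmod (g x))\<^sup>2)"
    proof (intro AE_I2)
      fix x
      have "cmod (f x + g x) \<le> cmod (f x) + cmod (g x)" by (rule norm_triangle_ineq)
      then have "(cmod (f x + g x))\<^sup>2 \<le> (cmod (f x) + cmod (g x))\<^sup>2"
        by (intro power_mono) auto
      also have "\<dots> \<le> 2 * (cmod (f x))\<^sup>2 + 2 * (cmod (g x))\<^sup>2"
        using zero_le_power2[of "cmod (f x) - cmod (g x)"] unfolding power2_diff power2_sum by linarith
      finally show "norm ((cmod (f x + g x))\<^sup>2) \<le> norm (2 * (cmod (f x))\<^sup>2 + 2 * (cmod (g x))\<^sup>2)" by simp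
    qed
  qed
  then show ?thesis using m unfolding L2_def by auto
qed

lemma L2_sum: "finite J \<Longrightarrow> (\<And>j. j \<in> J \<Longrightarrow> L2 \<tau> (g j)) \<Longrightarrow> L2 \<tau> (\<lambda>s. \<Sum>j\<in>J. c j * g j s)"
proof (induction J rule: finite_induct)
  case empty then show ?case by (simp add: L2_zero)
next
  case (insert j J)
  then show ?case by (simp add: L2_add L2_cmult)
qed

lemma L2norm2_eq: "L2norm2 \<tau> f = Re (integral\<^sup>L (MM \<tau>) (\<lambda>s. f s * cnj (f s)))"
proof -
  have "(\<lambda>s. f s * cnj (f s)) = (\<lambda>s. complex_of_real ((cmod (f s))\<^sup>2))"
    by (simp only: complex_norm_square)
  then show ?thesis unfolding L2norm2_def by (simp only: integral_complex_of_real Re_complex_of_real)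
qed

lemma L2norm2_nonneg: "L2norm2 \<tau> f \<ge> 0"
  unfolding L2norm2_def by (intro integral_nonneg_AE) auto

lemma L2_sq_integrable: "L2 \<tau> f \<Longrightarrow> integrable (MM \<tau>) (\<lambda>s. f s * cnj (f s))"
proof -
  assume "L2 \<tau> f"
  then have "integrable (MM \<tau>) (\<lambda>s. complex_of_real ((cmod (f s))\<^sup>2))"
    unfolding L2_def complex_of_real_integrable_eq by auto
  then show ?thesis by (simp only: complex_norm_square)
qed

lemma cnj_ee: "cnj (ee y s) = ee (-y) s"
  by (simp add: ee_def exp_cnj)
lemma ee_mult: "ee a s * ee b s = ee (a + b) s"
  by (simp add: ee_def exp_add[symmetric] distrib_left algebra_simps)



lemma gram:
  fixes u :: "nat \<Rightarrow> complex" and Q :: "nat \<Rightarrow> nat \<Rightarrow> complex"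
  assumes J: "finite J" and C: "C \<ge> 0"
    and Q: "\<And>j l. j \<in> J \<Longrightarrow> l \<in> J \<Longrightarrow> cmod (Q j l - (if j = l then of_real \<tau> else 0)) \<le> C"
  shows "cmod ((\<Sum>j\<in>J. \<Sum>l\<in>J. u j * cnj (u l) * Q j l) - of_real (\<tau> * (\<Sum>j\<in>J. (cmod (u j))\<^sup>2)))
           \<le> C * card J * (\<Sum>j\<in>J. (cmod (u j))\<^sup>2)"
proof -
  have d: "(\<Sum>j\<in>J. \<Sum>l\<in>J. u j * cnj (u l) * (if j = l then of_real \<tau> else 0))
      = of_real (\<tau> * (\<Sum>j\<in>J. (cmod (u j))\<^sup>2))"
  proof -
    have "(\<Sum>j\<in>J. \<Sum>l\<in>J. u j * cnj (u l) * (if j = l then of_real \<tau> else 0))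
        = (\<Sum>j\<in>J. u j * cnj (u j) * of_real \<tau>)"
      using J by (intro sum.cong refl) (simp add: if_distrib cong: if_cong)
    also have "\<dots> = (\<Sum>j\<in>J. of_real (\<tau> * (cmod (u j))\<^sup>2))"
      by (intro sum.cong refl) (simp add: complex_norm_square[symmetric] mult.commute del: of_real_power)
    also have "\<dots> = of_real (\<tau> * (\<Sum>j\<in>J. (cmod (u j))\<^sup>2))"
      by (simp add: sum_distrib_left del: of_real_power)
    finally show ?thesis .
  qed
  have "(\<Sum>j\<in>J. \<Sum>l\<in>J. u j * cnj (u l) * Q j l) - of_real (\<tau> * (\<Sum>j\<in>J. (cmod (u j))\<^sup>2))
     = (\<Sum>j\<in>J. \<Sum>l\<in>J. u j * cnj (u l) * (Q j l - (if j = l then of_real \<tau> else 0)))"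
    unfolding d[symmetric] by (simp add: sum_subtractf[symmetric] right_diff_distrib)
  also have "cmod \<dots> \<le> (\<Sum>j\<in>J. \<Sum>l\<in>J. cmod (u j) * cmod (u l) * C)"
  proof -
    have "cmod (\<Sum>j\<in>J. \<Sum>l\<in>J. u j * cnj (u l) * (Q j l - (if j = l then of_real \<tau> else 0)))
      \<le> (\<Sum>j\<in>J. cmod (\<Sum>l\<in>J. u j * cnj (u l) * (Q j l - (if j = l then of_real \<tau> else 0))))"
      by (rule norm_sum)
    also have "\<dots> \<le> (\<Sum>j\<in>J. \<Sum>l\<in>J. cmod (u j * cnj (u l) * (Q j l - (if j = l then of_real \<tau> else 0))))"
      by (intro sum_mono norm_sum)
    also have "\<dots> \<le> (\<Sum>j\<in>J. \<Sum>l\<in>J. cmod (u j) * cmod (u l) * C)"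
    proof (intro sum_mono)
      fix j l assume jl: "j \<in> J" "l \<in> J"
      have "cmod (u j) * cmod (u l) * cmod (Q j l - (if j = l then of_real \<tau> else 0)) \<le> cmod (u j) * cmod (u l) * C"
        by (rule mult_left_mono[OF Q[OF jl]]) auto
      then show "cmod (u j * cnj (u l) * (Q j l - (if j = l then of_real \<tau> else 0))) \<le> cmod (u j) * cmod (u l) * C"
        by (simp add: norm_mult)
    qed
    finally show ?thesis .
  qed
  also have "\<dots> = C * (\<Sum>j\<in>J. cmod (u j))\<^sup>2"
    by (simp add: power2_eq_square sum_product sum_distrib_left mult_ac)
  also have "\<dots> \<le> C * ((\<Sum>j\<in>J. (cmod (u j))\<^sup>2) * card J)"
    using C by (intro mult_left_mono sum_squared_le_sum_of_squares)
  finally show ?thesis by (simp add: mult_ac)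
qed



lemma ee_integrable: "integrable (MM \<tau>) (ee y)"
  by (intro continuous_imp_integrable_real continuous_intros)

lemma bessel:
  fixes f :: "real \<Rightarrow> complex" and z :: "nat \<Rightarrow> real"
  assumes J: "finite J" and tau: "\<tau> > 0" and C: "C \<ge> 0" and f: "L2 \<tau> f"
    and Cb: "\<And>m l. m \<in> J \<Longrightarrow> l \<in> J \<Longrightarrow> m \<noteq> l \<Longrightarrow> cmod (integral\<^sup>L (MM \<tau>) (ee (z l - z m))) \<le> C"
  shows "(\<Sum>m\<in>J. (cmod (integral\<^sup>L (MM \<tau>) (\<lambda>s. f s * ee (z m) s)))\<^sup>2) \<le> (\<tau> + C * card J) * L2norm2 \<tau> f"
proof -
  define F where "F m = integral\<^sup>L (MM \<tau>) (\<lambda>s. f s * ee (z m) s)" for m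
  define w where "w s = (\<Sum>m\<in>J. F m * ee (- z m) s)" for s
  define S where "S = (\<Sum>m\<in>J. (cmod (F m))\<^sup>2)"
  define N where "N = L2norm2 \<tau> f"
  define D where "D = \<tau> + C * card J"
  have S0: "S \<ge> 0" unfolding S_def by (intro sum_nonneg) auto
  have D0: "D > 0" unfolding D_def using tau C by (simp add: add_pos_nonneg)
  have fi: "integrable (MM \<tau>) f" using f by (rule L2_integrable)
  have fw: "(\<lambda>s. f s * cnj (w s)) = (\<lambda>s. \<Sum>m\<in>J. cnj (F m) * (f s * ee (z m) s))"
    by (auto simp: w_def sum_distrib_left cnj_ee mult_ac)
  have fw_int: "integrable (MM \<tau>) (\<lambda>s. f s * cnj (w s))"
    unfolding fw by (intro Bochner_Integration.integrable_sum integrable_mult_right int_mult_ee fi)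
  have a: "integral\<^sup>L (MM \<tau>) (\<lambda>s. f s * cnj (w s)) = of_real S"
  proof -
    have "integral\<^sup>L (MM \<tau>) (\<lambda>s. f s * cnj (w s)) = (\<Sum>m\<in>J. cnj (F m) * F m)"
      unfolding fw
      by (subst Bochner_Integration.integral_sum) (auto intro!: integrable_mult_right int_mult_ee fi simp: F_def)
    also have "\<dots> = (\<Sum>m\<in>J. of_real ((cmod (F m))\<^sup>2))"
      by (intro sum.cong refl) (simp only: complex_norm_square mult.commute)
    finally show ?thesis by (simp add: S_def del: of_real_power)
  qed
  have ww: "(\<lambda>s. w s * cnj (w s)) = (\<lambda>s. \<Sum>m\<in>J. \<Sum>l\<in>J. F m * cnj (F l) * ee (z l - z m) s)"
  proof
    fix s
    have "w s * cnj (w s) = (\<Sum>m\<in>J. \<Sum>l\<in>J. (F m * ee (- z m) s) * (cnj (F l) * ee (z l) s))"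
      by (simp add: w_def sum_product cnj_ee)
    also have "\<dots> = (\<Sum>m\<in>J. \<Sum>l\<in>J. F m * cnj (F l) * ee (z l - z m) s)"
    proof (intro sum.cong refl)
      fix m l
      have "(F m * ee (- z m) s) * (cnj (F l) * ee (z l) s) = F m * cnj (F l) * (ee (- z m) s * ee (z l) s)"
        by (simp add: mult_ac)
      then show "(F m * ee (- z m) s) * (cnj (F l) * ee (z l) s) = F m * cnj (F l) * ee (z l - z m) s"
        by (simp add: ee_mult)
    qed
    finally show "w s * cnj (w s) = (\<Sum>m\<in>J. \<Sum>l\<in>J. F m * cnj (F l) * ee (z l - z m) s)" .
  qed
  have ww_int: "integrable (MM \<tau>) (\<lambda>s. w s * cnj (w s))"
    unfolding ww by (intro Bochner_Integration.integrable_sum integrable_mult_right ee_integrable)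
  have b: "integral\<^sup>L (MM \<tau>) (\<lambda>s. w s * cnj (w s))
      = (\<Sum>m\<in>J. \<Sum>l\<in>J. F m * cnj (F l) * integral\<^sup>L (MM \<tau>) (ee (z l - z m)))"
    unfolding ww
    by (subst Bochner_Integration.integral_sum, fastforce intro!: Bochner_Integration.integrable_sum integrable_mult_right ee_integrable)
       (intro sum.cong refl, subst Bochner_Integration.integral_sum, auto intro!: integrable_mult_right ee_integrable)
  have c: "cmod (integral\<^sup>L (MM \<tau>) (\<lambda>s. w s * cnj (w s)) - of_real (\<tau> * S)) \<le> C * card J * S"
    unfolding b S_def
  proof (rule gram[OF J C])
    fix m l assume ml: "m \<in> J" "l \<in> J"
    show "cmod (integral\<^sup>L (MM \<tau>) (ee (z l - z m)) - (if m = l then of_real \<tau> else 0)) \<le> C"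
    proof (cases "m = l")
      case True then show ?thesis using tau C by (simp add: ee_int_0)
    next
      case False then show ?thesis using Cb[OF ml] by simp
    qed
  qed
  have R: "Re (integral\<^sup>L (MM \<tau>) (\<lambda>s. w s * cnj (w s))) \<le> D * S"
  proof -
    have "Re (integral\<^sup>L (MM \<tau>) (\<lambda>s. w s * cnj (w s)) - of_real (\<tau> * S)) \<le> C * card J * S"
      using c abs_Re_le_cmod abs_le_D1 order_trans by blast
    then show ?thesis by (simp add: D_def algebra_simps)
  qed
  define \<alpha> where "\<alpha> = 1 / D"
  define g where "g s = f s - of_real \<alpha> * w s" for s
  have gg: "(\<lambda>s. g s * cnj (g s)) = (\<lambda>s. f s * cnj (f s) - of_real \<alpha> * (f s * cnj (w s))
        - of_real \<alpha> * cnj (f s * cnj (w s)) + of_real (\<alpha>\<^sup>2) * (w s * cnj (w s)))"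
    by (auto simp: g_def algebra_simps power2_eq_square)
  have a2: "integral\<^sup>L (MM \<tau>) (\<lambda>s. cnj (f s) * w s) = of_real S"
  proof -
    have e: "(\<lambda>s. cnj (f s) * w s) = (\<lambda>s. cnj (f s * cnj (w s)))" by simp
    show ?thesis by (subst e, subst Bochner_Integration.integral_cnj, simp only: a complex_cnj_complex_of_real)
  qed
  have ff_int: "integrable (MM \<tau>) (\<lambda>s. f s * cnj (f s))" using f by (rule L2_sq_integrable)
  have "0 \<le> L2norm2 \<tau> g" by (rule L2norm2_nonneg)
  also have "L2norm2 \<tau> g = N - 2 * \<alpha> * S + \<alpha>\<^sup>2 * Re (integral\<^sup>L (MM \<tau>) (\<lambda>s. w s * cnj (w s)))"
    unfolding L2norm2_eq gg N_def
    apply (subst Bochner_Integration.integral_add, fastforce intro!: Bochner_Integration.integrable_diff integrable_mult_right ff_int fw_int, fastforce intro!: integrable_mult_right ww_int)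
    apply (subst Bochner_Integration.integral_diff, fastforce intro!: Bochner_Integration.integrable_diff integrable_mult_right ff_int fw_int, fastforce intro!: integrable_mult_right fw_int)
    apply (subst Bochner_Integration.integral_diff, fastforce intro!: ff_int, fastforce intro!: integrable_mult_right fw_int)
    apply (simp add: a a2 del: of_real_power)
    done
  also have "\<dots> \<le> N - 2 * \<alpha> * S + \<alpha>\<^sup>2 * (D * S)"
    by (intro add_left_mono mult_left_mono R) auto
  also have "\<dots> = N - S / D" using D0 by (simp add: \<alpha>_def field_simps power2_eq_square)
  finally have "S \<le> D * N" using D0 by (simp add: field_simps)
  then show ?thesis by (simp add: S_def F_def D_def N_def)
qed




lemma hs_facts:
  assumes "complex_hilbert_space sc ip"
  shows "\<And>x y z. ip (x + y) z = ip x z + ip y z"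
    and "\<And>a x y. ip (sc a x) y = a * ip x y"
    and "\<And>x y. ip y x = cnj (ip x y)"
    and "\<And>a b x. sc (a * b) x = sc a (sc b x)"
proof -
  note d = assms[unfolded complex_hilbert_space_def]
  show "\<And>x y z. ip (x + y) z = ip x z + ip y z"
    by (rule d[THEN conjunct2, THEN conjunct2, THEN conjunct2, THEN conjunct2, THEN conjunct1, rule_format])
  show "\<And>a x y. ip (sc a x) y = a * ip x y"
    by (rule d[THEN conjunct2, THEN conjunct2, THEN conjunct2, THEN conjunct2, THEN conjunct2, THEN conjunct1, rule_format])
  show "\<And>x y. ip y x = cnj (ip x y)"
    by (rule d[THEN conjunct2, THEN conjunct2, THEN conjunct2, THEN conjunct2, THEN conjunct2, THEN conjunct2, THEN conjunct1, rule_format])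
  show "\<And>a b x. sc (a * b) x = sc a (sc b x)"
    by (rule d[THEN conjunct2, THEN conjunct2, THEN conjunct1, rule_format])
qed

lemma ip_zero_left: assumes "complex_hilbert_space sc ip" shows "ip 0 z = 0"
proof -
  have "ip (0 + 0) z = ip 0 z + ip 0 z" by (rule hs_facts(1)[OF assms])
  then show ?thesis by simp
qed

lemma ip_sum_left: assumes H: "complex_hilbert_space sc ip" and "finite J"
  shows "ip (\<Sum>j\<in>J. g j) z = (\<Sum>j\<in>J. ip (g j) z)"
  using assms(2) by (induction J rule: finite_induct) (simp_all add: ip_zero_left[OF H] hs_facts(1)[OF H])

lemma ip_sum_right: assumes H: "complex_hilbert_space sc ip" and "finite J"
  shows "ip z (\<Sum>j\<in>J. g j) = (\<Sum>j\<in>J. ip z (g j))"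
  by (subst hs_facts(3)[OF H], subst ip_sum_left[OF assms]) (simp add: hs_facts(3)[OF H, of "g _" z])

lemma ip_sc_right: assumes H: "complex_hilbert_space sc ip"
  shows "ip y (sc a x) = cnj a * ip y x"
  by (subst hs_facts(3)[OF H], simp add: hs_facts(2)[OF H], subst hs_facts(3)[OF H, of y x], simp)

lemma ip_expand: assumes H: "complex_hilbert_space sc ip" and J: "finite J"
  shows "ip (\<Sum>j\<in>J. sc (\<alpha> j) (v j)) (\<Sum>l\<in>J. sc (\<beta> l) (v l))
     = (\<Sum>j\<in>J. \<Sum>l\<in>J. \<alpha> j * cnj (\<beta> l) * ip (v j) (v l))"
proof -
  have "ip (\<Sum>j\<in>J. sc (\<alpha> j) (v j)) (\<Sum>l\<in>J. sc (\<beta> l) (v l))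
      = (\<Sum>j\<in>J. \<alpha> j * ip (v j) (\<Sum>l\<in>J. sc (\<beta> l) (v l)))"
    by (simp add: ip_sum_left[OF H J] hs_facts(2)[OF H])
  also have "\<dots> = (\<Sum>j\<in>J. \<alpha> j * (\<Sum>l\<in>J. cnj (\<beta> l) * ip (v j) (v l)))"
    by (simp add: ip_sum_right[OF H J] ip_sc_right[OF H])
  also have "\<dots> = (\<Sum>j\<in>J. \<Sum>l\<in>J. \<alpha> j * cnj (\<beta> l) * ip (v j) (v l))"
    by (simp add: sum_distrib_left mult.assoc)
  finally show ?thesis .
qed

lemma K_facts:
  assumes "sc_isometry_semigroup sc ip K" "s \<ge> 0"
  shows "\<And>x y. K s (x + y) = K s x + K s y" and "\<And>a x. K s (sc a x) = sc a (K s x)"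
proof -
  note d = assms(1)[unfolded sc_isometry_semigroup_def]
  show "\<And>x y. K s (x + y) = K s x + K s y"
    using d[THEN conjunct1] assms(2) by blast
  show "\<And>a x. K s (sc a x) = sc a (K s x)"
    using d[THEN conjunct2, THEN conjunct1] assms(2) by blast
qed

lemma K_sum: assumes K: "sc_isometry_semigroup sc ip K" "s \<ge> 0" and "finite J"
  shows "K s (\<Sum>j\<in>J. g j) = (\<Sum>j\<in>J. K s (g j))"
  using assms(3)
proof (induction J rule: finite_induct)
  case empty
  have "K s (0 + 0) = K s 0 + K s 0" by (rule K_facts(1)[OF K])
  then show ?case by simp
next
  case (insert j J) then show ?case by (simp add: K_facts(1)[OF K])
qed

lemma kernel:
  assumes H: "complex_hilbert_space sc ip" and K: "sc_isometry_semigroup sc ip K"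
    and J: "finite J"
    and on: "\<forall>j\<in>J. \<forall>l\<in>J. ip (v j) (v l) = (if j = l then 1 else 0)"
    and ev: "\<forall>j\<in>J. \<forall>s\<ge>0. K s (v j) = sc (exp (\<i> * complex_of_real (s * x j))) (v j)"
    and h: "h = (\<Sum>j\<in>J. sc (a j) (v j))"
    and s: "s \<ge> 0" and t: "t \<ge> 0"
  shows "ip (K s h) (K t h) = (\<Sum>m\<in>J. of_real ((cmod (a m))\<^sup>2) * (ee (x m) s * cnj (ee (x m) t)))"
proof -
  have Kh: "K r h = (\<Sum>j\<in>J. sc (a j * ee (x j) r) (v j))" if r: "r \<ge> 0" for r
  proof -
    have "K r h = (\<Sum>j\<in>J. K r (sc (a j) (v j)))" unfolding h by (rule K_sum[OF K r J])
    also have "\<dots> = (\<Sum>j\<in>J. sc (a j * ee (x j) r) (v j))"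
    proof (intro sum.cong refl)
      fix j assume j: "j \<in> J"
      have "K r (sc (a j) (v j)) = sc (a j) (sc (ee (x j) r) (v j))"
        using K_facts(2)[OF K r] ev j r by (simp add: ee_def)
      also have "\<dots> = sc (a j * ee (x j) r) (v j)"
        using hs_facts(4)[OF H] by metis
      finally show "K r (sc (a j) (v j)) = sc (a j * ee (x j) r) (v j)" .
    qed
    finally show ?thesis .
  qed
  have "ip (K s h) (K t h) = (\<Sum>j\<in>J. \<Sum>l\<in>J. (a j * ee (x j) s) * cnj (a l * ee (x l) t) * ip (v j) (v l))"
    unfolding Kh[OF s] Kh[OF t] by (rule ip_expand[OF H J])
  also have "\<dots> = (\<Sum>j\<in>J. (a j * ee (x j) s) * cnj (a j * ee (x j) t))"
  proof (intro sum.cong refl)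
    fix j assume j: "j \<in> J"
    have "(\<Sum>l\<in>J. (a j * ee (x j) s) * cnj (a l * ee (x l) t) * ip (v j) (v l))
        = (\<Sum>l\<in>J. if j = l then (a j * ee (x j) s) * cnj (a j * ee (x j) t) else 0)"
      by (intro sum.cong refl) (use on j in auto)
    also have "\<dots> = (a j * ee (x j) s) * cnj (a j * ee (x j) t)" using J j by simp
    finally show "(\<Sum>l\<in>J. (a j * ee (x j) s) * cnj (a l * ee (x l) t) * ip (v j) (v l))
        = (a j * ee (x j) s) * cnj (a j * ee (x j) t)" .
  qed
  also have "\<dots> = (\<Sum>m\<in>J. of_real ((cmod (a m))\<^sup>2) * (ee (x m) s * cnj (ee (x m) t)))"
  proof (intro sum.cong refl)
    fix m
    have "(a m * ee (x m) s) * cnj (a m * ee (x m) t) = (a m * cnj (a m)) * (ee (x m) s * cnj (ee (x m) t))"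
      by (simp add: mult_ac)
    then show "(a m * ee (x m) s) * cnj (a m * ee (x m) t) = of_real ((cmod (a m))\<^sup>2) * (ee (x m) s * cnj (ee (x m) t))"
      by (simp only: complex_norm_square)
  qed
  finally show ?thesis .
qed



lemma Aform_eq:
  fixes b :: "nat \<Rightarrow> real"
  assumes tau: "\<tau> > 0" and fi: "integrable (MM \<tau>) f" and J: "finite J"
    and kern: "\<And>s t. s \<ge> 0 \<Longrightarrow> t \<ge> 0 \<Longrightarrow>
       ip (K s h) (K t h) = (\<Sum>m\<in>J. of_real (b m) * (ee (x m) s * cnj (ee (x m) t)))"
  shows "A_form ip K h \<tau> f = (1 / \<tau>) * (\<Sum>m\<in>J. b m * (cmod (integral\<^sup>L (MM \<tau>) (\<lambda>s. f s * ee (x m) s)))\<^sup>2)"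
proof -
  define F where "F m = integral\<^sup>L (MM \<tau>) (\<lambda>s. f s * ee (x m) s)" for m
  have op: "A_op ip K h \<tau> f t = of_real (1 / \<tau>) * (\<Sum>m\<in>J. of_real (b m) * cnj (ee (x m) t) * F m)"
    if t: "t \<in> {0..\<tau>}" for t
  proof -
    have "integral\<^sup>L (MM \<tau>) (\<lambda>s. f s * ip (K s h) (K t h))
        = integral\<^sup>L (MM \<tau>) (\<lambda>s. \<Sum>m\<in>J. (of_real (b m) * cnj (ee (x m) t)) * (f s * ee (x m) s))"
    proof (rule Bochner_Integration.integral_cong[OF refl])
      fix s assume "s \<in> space (MM \<tau>)"
      then have s: "s \<ge> 0" by simp
      show "f s * ip (K s h) (K t h) = (\<Sum>m\<in>J. (of_real (b m) * cnj (ee (x m) t)) * (f s * ee (x m) s))"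
        using t by (simp add: kern[OF s] sum_distrib_left mult_ac)
    qed
    also have "\<dots> = (\<Sum>m\<in>J. of_real (b m) * cnj (ee (x m) t) * F m)"
      by (subst Bochner_Integration.integral_sum) (auto intro!: integrable_mult_right int_mult_ee fi simp: F_def)
    finally show ?thesis by (simp add: A_op_def divide_inverse)
  qed
  have "integral\<^sup>L (MM \<tau>) (\<lambda>t. A_op ip K h \<tau> f t * cnj (f t))
      = integral\<^sup>L (MM \<tau>) (\<lambda>t. \<Sum>m\<in>J. (of_real (1 / \<tau>) * of_real (b m) * F m) * cnj (f t * ee (x m) t))"
  proof (rule Bochner_Integration.integral_cong[OF refl])
    fix t assume "t \<in> space (MM \<tau>)"
    then have t: "t \<in> {0..\<tau>}" by simp
    show "A_op ip K h \<tau> f t * cnj (f t) = (\<Sum>m\<in>J. (of_real (1 / \<tau>) * of_real (b m) * F m) * cnj (f t * ee (x m) t))"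
      by (simp add: op[OF t] sum_distrib_left sum_distrib_right mult_ac)
  qed
  also have "\<dots> = (\<Sum>m\<in>J. (of_real (1 / \<tau>) * of_real (b m) * F m) * integral\<^sup>L (MM \<tau>) (\<lambda>t. cnj (f t * ee (x m) t)))"
    apply (subst Bochner_Integration.integral_sum)
     apply (rule integrable_mult_right, rule integrable_cnj, rule int_mult_ee, rule fi)
    apply (rule sum.cong[OF refl], rule integral_mult_right_zero)
    done
  also have "\<dots> = (\<Sum>m\<in>J. (of_real (1 / \<tau>) * of_real (b m) * F m) * cnj (F m))"
    by (simp only: Bochner_Integration.integral_cnj F_def)
  also have "\<dots> = of_real ((1 / \<tau>) * (\<Sum>m\<in>J. b m * (cmod (F m))\<^sup>2))"
  proof -
    have "(\<Sum>m\<in>J. (of_real (1 / \<tau>) * of_real (b m) * F m) * cnj (F m))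
        = (\<Sum>m\<in>J. of_real ((1 / \<tau>) * (b m * (cmod (F m))\<^sup>2)))"
    proof (intro sum.cong refl)
      fix m
      have "(of_real (1 / \<tau>) * of_real (b m) * F m) * cnj (F m) = of_real (1 / \<tau>) * of_real (b m) * (F m * cnj (F m))"
        by (simp add: mult_ac)
      also have "\<dots> = of_real ((1 / \<tau>) * (b m * (cmod (F m))\<^sup>2))"
        by (simp only: complex_norm_square[symmetric] of_real_mult mult.assoc)
      finally show "(of_real (1 / \<tau>) * of_real (b m) * F m) * cnj (F m) = of_real ((1 / \<tau>) * (b m * (cmod (F m))\<^sup>2))" .
    qed
    then show ?thesis by (simp only: sum_distrib_left of_real_sum)
  qed
  finally show ?thesis unfolding A_form_def F_def by simp
qed



lemma nontriv_sol:
  fixes M :: "nat \<Rightarrow> nat \<Rightarrow> 'a::field"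
  shows "finite J \<Longrightarrow> card J > n \<Longrightarrow> \<exists>c. (\<exists>j\<in>J. c j \<noteq> 0) \<and> (\<forall>r<n. (\<Sum>j\<in>J. M r j * c j) = 0)"
proof (induction n arbitrary: J M)
  case 0
  then obtain j where "j \<in> J" by fastforce
  then show ?case by (intro exI[of _ "\<lambda>_. 1"]) auto
next
  case (Suc n)
  show ?case
  proof (cases "\<forall>j\<in>J. M n j = 0")
    case True
    obtain c where c: "\<exists>j\<in>J. c j \<noteq> 0" "\<forall>r<n. (\<Sum>j\<in>J. M r j * c j) = 0"
      using Suc.IH[of J M] Suc.prems by auto
    show ?thesis
    proof (intro exI[of _ c] conjI allI impI)
      fix r assume "r < Suc n"
      then show "(\<Sum>j\<in>J. M r j * c j) = 0" using c True
        by (cases "r = n") auto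
    qed (rule c(1))
  next
    case False
    then obtain p where p: "p \<in> J" "M n p \<noteq> 0" by auto
    define J' where "J' = J - {p}"
    define M' where "M' r j = M r j - M r p * M n j / M n p" for r j
    have J': "finite J'" "card J' > n" using Suc.prems p by (auto simp: J'_def)
    obtain d where d: "\<exists>j\<in>J'. d j \<noteq> 0" "\<forall>r<n. (\<Sum>j\<in>J'. M' r j * d j) = 0"
      using Suc.IH[OF J'] by blast
    define cp where "cp = - (\<Sum>j\<in>J'. M n j * d j) / M n p"
    define c where "c j = (if j = p then cp else d j)" for j
    have split: "(\<Sum>j\<in>J. M r j * c j) = M r p * cp + (\<Sum>j\<in>J'. M r j * d j)" for r
    proof -
      have "(\<Sum>j\<in>J. M r j * c j) = M r p * c p + (\<Sum>j\<in>J'. M r j * c j)"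
        using p Suc.prems(1) unfolding J'_def by (simp add: sum.remove)
      also have "(\<Sum>j\<in>J'. M r j * c j) = (\<Sum>j\<in>J'. M r j * d j)"
        by (intro sum.cong refl) (auto simp: c_def J'_def)
      finally show ?thesis by (simp add: c_def)
    qed
    show ?thesis
    proof (intro exI[of _ c] conjI allI impI)
      show "\<exists>j\<in>J. c j \<noteq> 0" using d(1) by (auto simp: c_def J'_def)
    next
      fix r assume r: "r < Suc n"
      show "(\<Sum>j\<in>J. M r j * c j) = 0"
      proof (cases "r = n")
        case True then show ?thesis using p by (simp add: split cp_def)
      next
        case False
        then have "r < n" using r by simp
        then have "(\<Sum>j\<in>J'. M' r j * d j) = 0" using d(2) by auto
        moreover have "(\<Sum>j\<in>J'. M' r j * d j) = (\<Sum>j\<in>J'. M r j * d j) - M r p / M n p * (\<Sum>j\<in>J'. M n j * d j)"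
          by (simp add: M'_def algebra_simps sum_subtractf sum_distrib_left)
        ultimately have "(\<Sum>j\<in>J'. M r j * d j) = M r p / M n p * (\<Sum>j\<in>J'. M n j * d j)" by simp
        then show ?thesis by (simp add: split cp_def)
      qed
    qed
  qed
qed



lemma upper_val:
  fixes b x :: "nat \<Rightarrow> real" and g :: "nat \<Rightarrow> real \<Rightarrow> complex"
  assumes tau: "\<tau> > 0" and C: "C \<ge> 0" and i: "i \<in> {1..k}"
    and kern: "\<And>s t. s \<ge> 0 \<Longrightarrow> t \<ge> 0 \<Longrightarrow>
       ip (K s h) (K t h) = (\<Sum>m\<in>{1..k}. of_real (b m) * (ee (x m) s * cnj (ee (x m) t)))"
    and Cb: "\<And>m l. m \<in> {1..k} \<Longrightarrow> l \<in> {1..k} \<Longrightarrow> m \<noteq> l \<Longrightarrow> cmod (integral\<^sup>L (MM \<tau>) (ee (x l - x m))) \<le> C"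
    and bmono: "\<And>m l. m \<in> {1..k} \<Longrightarrow> l \<in> {1..k} \<Longrightarrow> m \<le> l \<Longrightarrow> b l \<le> b m"
    and bnn: "\<And>m. b m \<ge> 0"
    and gL2: "\<forall>j<i. L2 \<tau> (g j)"
    and indep: "\<forall>c :: nat \<Rightarrow> complex. L2norm2 \<tau> (\<lambda>s. \<Sum>j<i. c j * g j s) = 0 \<longrightarrow> (\<forall>j<i. c j = 0)"
  shows "bdd_below ((\<lambda>c. A_form ip K h \<tau> (\<lambda>s. \<Sum>j<i. c j * g j s) / L2norm2 \<tau> (\<lambda>s. \<Sum>j<i. c j * g j s))
            ` {c :: nat \<Rightarrow> complex. \<exists>j<i. c j \<noteq> 0})"
    and "(INF c \<in> {c :: nat \<Rightarrow> complex. \<exists>j<i. c j \<noteq> 0}.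
              A_form ip K h \<tau> (\<lambda>s. \<Sum>j<i. c j * g j s) / L2norm2 \<tau> (\<lambda>s. \<Sum>j<i. c j * g j s))
         \<le> b i * (\<tau> + C * k) / \<tau>"
proof -
  define fc where "fc c = (\<lambda>s. \<Sum>j<i. c j * g j s)" for c :: "nat \<Rightarrow> complex"
  have fcL2: "L2 \<tau> (fc c)" for c unfolding fc_def by (intro L2_sum) (use gL2 in auto)
  have Aeq: "A_form ip K h \<tau> (fc c) = (1 / \<tau>) * (\<Sum>m\<in>{1..k}. b m * (cmod (integral\<^sup>L (MM \<tau>) (\<lambda>s. fc c s * ee (x m) s)))\<^sup>2)" for c
    by (rule Aform_eq[where b=b and x=x and J="{1..k}" and ip=ip and K=K and h=h, OF tau L2_integrable[OF fcL2[of c]] finite_atLeastAtMost kern])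
  have Anonneg: "A_form ip K h \<tau> (fc c) \<ge> 0" for c
    unfolding Aeq using tau bnn by (intro mult_nonneg_nonneg sum_nonneg) auto
  show bdd: "bdd_below ((\<lambda>c. A_form ip K h \<tau> (\<lambda>s. \<Sum>j<i. c j * g j s) / L2norm2 \<tau> (\<lambda>s. \<Sum>j<i. c j * g j s))
            ` {c :: nat \<Rightarrow> complex. \<exists>j<i. c j \<noteq> 0})"
    unfolding bdd_below_def
    by (rule exI[of _ 0], auto intro!: divide_nonneg_nonneg L2norm2_nonneg Anonneg[unfolded fc_def])
  define M where "M r j = integral\<^sup>L (MM \<tau>) (\<lambda>s. g j s * ee (x (Suc r)) s)" for r j
  have i1: "i \<ge> 1" "i \<le> k" using i by auto
  obtain c where c1: "\<exists>j\<in>{..<i}. c j \<noteq> 0" and c2: "\<forall>r<i - 1. (\<Sum>j\<in>{..<i}. M r j * c j) = 0"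
    using nontriv_sol[of "{..<i}" "i - 1" M] i1 by auto
  have gi: "integrable (MM \<tau>) (g j)" if "j < i" for j using gL2 that L2_integrable by blast
  have Fsum: "integral\<^sup>L (MM \<tau>) (\<lambda>s. fc c s * ee (x m) s) = (\<Sum>j<i. c j * integral\<^sup>L (MM \<tau>) (\<lambda>s. g j s * ee (x m) s))" for m
  proof -
    have "(\<lambda>s. fc c s * ee (x m) s) = (\<lambda>s. \<Sum>j<i. c j * (g j s * ee (x m) s))"
      unfolding fc_def sum_distrib_right by (simp add: mult.assoc)
    then show ?thesis
      by (simp only:, subst Bochner_Integration.integral_sum)
         (auto intro!: integrable_mult_right int_mult_ee gi)
  qed
  have F0: "integral\<^sup>L (MM \<tau>) (\<lambda>s. fc c s * ee (x m) s) = 0" if m: "m \<ge> 1" "m < i" for m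
  proof -
    have "(\<Sum>j\<in>{..<i}. M (m - 1) j * c j) = 0" using c2 m by auto
    moreover have "Suc (m - 1) = m" using m by simp
    ultimately show ?thesis unfolding Fsum by (simp add: M_def mult_ac)
  qed
  define N where "N = L2norm2 \<tau> (fc c)"
  have N0: "N > 0"
  proof -
    have "N \<noteq> 0" using indep c1 unfolding N_def fc_def by auto
    then show ?thesis using L2norm2_nonneg[of \<tau> "fc c"] unfolding N_def by linarith
  qed
  define F where "F m = integral\<^sup>L (MM \<tau>) (\<lambda>s. fc c s * ee (x m) s)" for m
  have "(\<Sum>m\<in>{1..k}. b m * (cmod (F m))\<^sup>2) \<le> (\<Sum>m\<in>{1..k}. b i * (cmod (F m))\<^sup>2)"
  proof (intro sum_mono)
    fix m assume m: "m \<in> {1..k}"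
    show "b m * (cmod (F m))\<^sup>2 \<le> b i * (cmod (F m))\<^sup>2"
    proof (cases "m < i")
      case True then show ?thesis using m F0[of m] by (simp add: F_def)
    next
      case False then show ?thesis using m i by (intro mult_right_mono bmono) auto
    qed
  qed
  also have "\<dots> = b i * (\<Sum>m\<in>{1..k}. (cmod (F m))\<^sup>2)" by (simp add: sum_distrib_left)
  also have "\<dots> \<le> b i * ((\<tau> + C * card {1..k}) * N)"
    unfolding F_def N_def using bnn
    by (intro mult_left_mono bessel[OF _ tau C fcL2] Cb) auto
  finally have "A_form ip K h \<tau> (fc c) \<le> (1 / \<tau>) * (b i * ((\<tau> + C * k) * N))"
    unfolding Aeq F_def[symmetric] using tau by (simp add: divide_right_mono)
  then have "A_form ip K h \<tau> (fc c) / N \<le> b i * (\<tau> + C * k) / \<tau>"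
    using N0 tau by (simp add: field_simps)
  moreover have "c \<in> {c :: nat \<Rightarrow> complex. \<exists>j<i. c j \<noteq> 0}" using c1 by auto
  ultimately show "(INF c \<in> {c :: nat \<Rightarrow> complex. \<exists>j<i. c j \<noteq> 0}.
              A_form ip K h \<tau> (\<lambda>s. \<Sum>j<i. c j * g j s) / L2norm2 \<tau> (\<lambda>s. \<Sum>j<i. c j * g j s))
         \<le> b i * (\<tau> + C * k) / \<tau>"
    using cINF_lower[OF bdd] unfolding N_def fc_def by (meson order_trans)
qed



lemma sq_lower:
  fixes a p q :: real
  assumes "a \<ge> p - q" "a \<ge> 0" "p \<ge> 0" "q \<ge> 0"
  shows "a\<^sup>2 \<ge> p\<^sup>2 - 2 * p * q"
proof (cases "p \<le> q")
  case True
  then have "p * p \<le> p * q" using assms by (intro mult_left_mono) auto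
  moreover have "2 * p * q = 2 * (p * q)" "p\<^sup>2 = p * p" by (simp_all add: power2_eq_square)
  ultimately have "p\<^sup>2 - 2 * p * q \<le> 0" using assms mult_nonneg_nonneg[of p q] by linarith
  then show ?thesis by (meson order_trans zero_le_power2)
next
  case False
  then have "(p - q)\<^sup>2 \<le> a\<^sup>2" using assms by (intro power_mono) auto
  moreover have "(p - q)\<^sup>2 = p\<^sup>2 - 2 * p * q + q\<^sup>2" by (simp add: power2_diff)
  ultimately show ?thesis using zero_le_power2[of q] by linarith
qed

lemma lower_val:
  fixes b x :: "nat \<Rightarrow> real"
  assumes tau: "\<tau> > 0" and C: "C \<ge> 0" and i: "i \<in> {1..k}"
    and kern: "\<And>s t. s \<ge> 0 \<Longrightarrow> t \<ge> 0 \<Longrightarrow>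
       ip (K s h) (K t h) = (\<Sum>m\<in>{1..k}. of_real (b m) * (ee (x m) s * cnj (ee (x m) t)))"
    and Cb: "\<And>m l. m \<in> {1..k} \<Longrightarrow> l \<in> {1..k} \<Longrightarrow> m \<noteq> l \<Longrightarrow> cmod (integral\<^sup>L (MM \<tau>) (ee (x l - x m))) \<le> C"
    and bmono: "\<And>m l. m \<in> {1..k} \<Longrightarrow> l \<in> {1..k} \<Longrightarrow> m \<le> l \<Longrightarrow> b l \<le> b m"
    and bnn: "\<And>m. b m \<ge> 0"
    and big: "\<tau> > 2 * C * i"
  shows "\<forall>j<i. L2 \<tau> ((\<lambda>j. ee (- x (Suc j))) j)"
    and "\<forall>c :: nat \<Rightarrow> complex. L2norm2 \<tau> (\<lambda>s. \<Sum>j<i. c j * (\<lambda>j. ee (- x (Suc j))) j s) = 0 \<longrightarrow> (\<forall>j<i. c j = 0)"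
    and "b i * (\<tau> - 2 * C * i) / (\<tau> + C * i) \<le> (INF c \<in> {c :: nat \<Rightarrow> complex. \<exists>j<i. c j \<noteq> 0}.
              A_form ip K h \<tau> (\<lambda>s. \<Sum>j<i. c j * (\<lambda>j. ee (- x (Suc j))) j s) / L2norm2 \<tau> (\<lambda>s. \<Sum>j<i. c j * (\<lambda>j. ee (- x (Suc j))) j s))"
proof -
  define g where "g j = ee (- x (Suc j))" for j
  define fc where "fc c = (\<lambda>s. \<Sum>j<i. c j * g j s)" for c :: "nat \<Rightarrow> complex"
  define Q where "Q j l = integral\<^sup>L (MM \<tau>) (ee (x (Suc l) - x (Suc j)))" for j l
  define nc where "nc c = (\<Sum>j<i. (cmod (c j))\<^sup>2)" for c :: "nat \<Rightarrow> complex"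
  have ik: "i \<le> k" "i \<ge> 1" using i by auto
  show gL2: "\<forall>j<i. L2 \<tau> ((\<lambda>j. ee (- x (Suc j))) j)" by (auto intro: L2_ee)
  have fcL2: "L2 \<tau> (fc c)" for c unfolding fc_def g_def by (intro L2_sum L2_ee) auto
  have Qb: "cmod (Q j l - (if j = l then of_real \<tau> else 0)) \<le> C" if "j \<in> {..<i}" "l \<in> {..<i}" for j l
  proof (cases "j = l")
    case True then show ?thesis using tau C by (simp add: Q_def ee_int_0)
  next
    case False then show ?thesis using Cb[of "Suc j" "Suc l"] that ik by (simp add: Q_def)
  qed
  have Nexp: "L2norm2 \<tau> (fc c) = Re (\<Sum>j<i. \<Sum>l<i. c j * cnj (c l) * Q j l)" for c
  proof -
    have e: "(\<lambda>s. fc c s * cnj (fc c s)) = (\<lambda>s. \<Sum>j<i. \<Sum>l<i. c j * cnj (c l) * ee (x (Suc l) - x (Suc j)) s)"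
    proof
      fix s
      have "fc c s * cnj (fc c s) = (\<Sum>j<i. \<Sum>l<i. (c j * g j s) * (cnj (c l) * cnj (g l s)))"
        by (simp add: fc_def sum_product)
      also have "\<dots> = (\<Sum>j<i. \<Sum>l<i. c j * cnj (c l) * ee (x (Suc l) - x (Suc j)) s)"
      proof (intro sum.cong refl)
        fix j l
        have "(c j * g j s) * (cnj (c l) * cnj (g l s)) = c j * cnj (c l) * (ee (- x (Suc j)) s * ee (x (Suc l)) s)"
          by (simp add: g_def cnj_ee mult_ac)
        then show "(c j * g j s) * (cnj (c l) * cnj (g l s)) = c j * cnj (c l) * ee (x (Suc l) - x (Suc j)) s"
          by (simp add: ee_mult)
      qed
      finally show "fc c s * cnj (fc c s) = (\<Sum>j<i. \<Sum>l<i. c j * cnj (c l) * ee (x (Suc l) - x (Suc j)) s)" .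
    qed
    show ?thesis unfolding L2norm2_eq e
      by (subst Bochner_Integration.integral_sum, fastforce intro!: Bochner_Integration.integrable_sum integrable_mult_right ee_integrable)
         (intro arg_cong[where f=Re] sum.cong refl, subst Bochner_Integration.integral_sum, auto intro!: integrable_mult_right ee_integrable simp: Q_def)
  qed
  have Nbounds: "\<bar>L2norm2 \<tau> (fc c) - \<tau> * nc c\<bar> \<le> C * i * nc c" for c
  proof -
    have "cmod ((\<Sum>j<i. \<Sum>l<i. c j * cnj (c l) * Q j l) - of_real (\<tau> * nc c)) \<le> C * card {..<i} * nc c"
      unfolding nc_def by (rule gram[OF finite_lessThan C Qb])
    then have "\<bar>Re ((\<Sum>j<i. \<Sum>l<i. c j * cnj (c l) * Q j l) - of_real (\<tau> * nc c))\<bar> \<le> C * i * nc c"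
      using abs_Re_le_cmod order_trans by fastforce
    then show ?thesis unfolding Nexp by simp
  qed
  have nc0: "nc c > 0" if cz: "\<exists>j<i. c j \<noteq> 0" for c :: "nat \<Rightarrow> complex"
  proof -
    obtain j where j: "j < i" "c j \<noteq> 0" using cz by blast
    have "(cmod (c j))\<^sup>2 \<le> nc c" unfolding nc_def using j
      by (intro member_le_sum) auto
    moreover have "(cmod (c j))\<^sup>2 > 0" using j by simp
    ultimately show ?thesis by linarith
  qed
  have Npos: "L2norm2 \<tau> (fc c) > 0" if "\<exists>j<i. c j \<noteq> 0" for c :: "nat \<Rightarrow> complex"
  proof -
    have ci: "0 \<le> C * real i" using C by simp
    have "C * i < \<tau>" using big ci by linarith
    then have "C * i * nc c < \<tau> * nc c" using nc0[OF that]
      by (intro mult_strict_right_mono) auto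
    then show ?thesis using Nbounds[of c] by linarith
  qed
  show "\<forall>c :: nat \<Rightarrow> complex. L2norm2 \<tau> (\<lambda>s. \<Sum>j<i. c j * (\<lambda>j. ee (- x (Suc j))) j s) = 0 \<longrightarrow> (\<forall>j<i. c j = 0)"
    using Npos unfolding fc_def g_def by fastforce
  have Aeq: "A_form ip K h \<tau> (fc c) = (1 / \<tau>) * (\<Sum>m\<in>{1..k}. b m * (cmod (integral\<^sup>L (MM \<tau>) (\<lambda>s. fc c s * ee (x m) s)))\<^sup>2)" for c
    by (rule Aform_eq[where b=b and x=x and J="{1..k}" and ip=ip and K=K and h=h, OF tau L2_integrable[OF fcL2[of c]] finite_atLeastAtMost kern])
  have Fexp: "integral\<^sup>L (MM \<tau>) (\<lambda>s. fc c s * ee (x (Suc j')) s) = (\<Sum>j<i. c j * Q j j')" for c j'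
  proof -
    have "(\<lambda>s. fc c s * ee (x (Suc j')) s) = (\<lambda>s. \<Sum>j<i. c j * ee (x (Suc j') - x (Suc j)) s)"
    proof
      fix s
      show "fc c s * ee (x (Suc j')) s = (\<Sum>j<i. c j * ee (x (Suc j') - x (Suc j)) s)"
        unfolding fc_def sum_distrib_right
        by (intro sum.cong refl) (simp add: g_def mult.assoc ee_mult)
    qed
    then show ?thesis
      by (simp only:, subst Bochner_Integration.integral_sum) (auto intro!: integrable_mult_right ee_integrable simp: Q_def)
  qed
  have Flow: "cmod (integral\<^sup>L (MM \<tau>) (\<lambda>s. fc c s * ee (x (Suc j')) s)) \<ge> \<tau> * cmod (c j') - C * (\<Sum>j<i. cmod (c j))"
    if j': "j' < i" for c j'
  proof -
    have "(\<Sum>j<i. c j * Q j j') = of_real \<tau> * c j' + (\<Sum>j<i. c j * (Q j j' - (if j = j' then of_real \<tau> else 0)))"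
    proof -
      have "(\<Sum>j<i. c j * (if j = j' then of_real \<tau> else 0)) = (\<Sum>j<i. if j = j' then c j * of_real \<tau> else 0)"
        by (intro sum.cong) auto
      also have "\<dots> = c j' * of_real \<tau>" using j' by simp
      finally have d1: "(\<Sum>j<i. c j * (if j = j' then of_real \<tau> else 0)) = c j' * of_real \<tau>" .
      show ?thesis unfolding right_diff_distrib sum_subtractf d1 by simp
    qed
    moreover have "cmod (\<Sum>j<i. c j * (Q j j' - (if j = j' then of_real \<tau> else 0))) \<le> C * (\<Sum>j<i. cmod (c j))"
    proof -
      have "cmod (\<Sum>j<i. c j * (Q j j' - (if j = j' then of_real \<tau> else 0))) \<le> (\<Sum>j<i. cmod (c j * (Q j j' - (if j = j' then of_real \<tau> else 0))))"
        by (rule norm_sum)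
      also have "\<dots> \<le> (\<Sum>j<i. cmod (c j) * C)"
      proof (intro sum_mono)
        fix j assume j: "j \<in> {..<i}"
        have "cmod (c j) * cmod (Q j j' - (if j = j' then of_real \<tau> else 0)) \<le> cmod (c j) * C"
          by (rule mult_left_mono[OF Qb[OF j]]) (use j' in auto)
        then show "cmod (c j * (Q j j' - (if j = j' then of_real \<tau> else 0))) \<le> cmod (c j) * C"
          by (simp add: norm_mult)
      qed
      finally show ?thesis by (simp add: sum_distrib_left mult.commute)
    qed
    moreover have "cmod (of_real \<tau> * c j') = \<tau> * cmod (c j')" using tau by (simp add: norm_mult)
    ultimately show ?thesis unfolding Fexp
      using norm_triangle_ineq[of "of_real \<tau> * c j'" "\<Sum>j<i. c j * (Q j j' - (if j = j' then of_real \<tau> else 0))"]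
        norm_triangle_ineq4[of "of_real \<tau> * c j' + (\<Sum>j<i. c j * (Q j j' - (if j = j' then of_real \<tau> else 0)))"
          "\<Sum>j<i. c j * (Q j j' - (if j = j' then of_real \<tau> else 0))"]
      by simp
  qed
  show "b i * (\<tau> - 2 * C * i) / (\<tau> + C * i) \<le> (INF c \<in> {c :: nat \<Rightarrow> complex. \<exists>j<i. c j \<noteq> 0}.
              A_form ip K h \<tau> (\<lambda>s. \<Sum>j<i. c j * (\<lambda>j. ee (- x (Suc j))) j s) / L2norm2 \<tau> (\<lambda>s. \<Sum>j<i. c j * (\<lambda>j. ee (- x (Suc j))) j s))"
  proof (rule cINF_greatest)
    have "\<exists>j<i. (\<lambda>_. 1::complex) j \<noteq> 0" using ik by (intro exI[of _ 0]) simp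
    then have m: "(\<lambda>_. 1::complex) \<in> {c :: nat \<Rightarrow> complex. \<exists>j<i. c j \<noteq> 0}" by (simp only: mem_Collect_eq)
    show "{c :: nat \<Rightarrow> complex. \<exists>j<i. c j \<noteq> 0} \<noteq> {}"
    proof
      assume "{c :: nat \<Rightarrow> complex. \<exists>j<i. c j \<noteq> 0} = {}"
      with m show False by (simp only: empty_iff)
    qed
  next
    fix c :: "nat \<Rightarrow> complex" assume "c \<in> {c :: nat \<Rightarrow> complex. \<exists>j<i. c j \<noteq> 0}"
    then have cnz: "\<exists>j<i. c j \<noteq> 0" by simp
    define F where "F m = integral\<^sup>L (MM \<tau>) (\<lambda>s. fc c s * ee (x m) s)" for m
    define \<sigma> where "\<sigma> = (\<Sum>j<i. cmod (c j))"
    have sig0: "\<sigma> \<ge> 0" unfolding \<sigma>_def by (intro sum_nonneg) auto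
    have sig2: "\<sigma>\<^sup>2 \<le> i * nc c" unfolding \<sigma>_def nc_def
      using sum_squared_le_sum_of_squares[of "\<lambda>j. cmod (c j)" "{..<i}"] by (simp add: mult.commute)
    have sq: "(cmod (F (Suc j')))\<^sup>2 \<ge> \<tau>\<^sup>2 * (cmod (c j'))\<^sup>2 - 2 * \<tau> * C * \<sigma> * cmod (c j')" if "j' < i" for j'
    proof -
      have "(cmod (F (Suc j')))\<^sup>2 \<ge> (\<tau> * cmod (c j'))\<^sup>2 - 2 * (\<tau> * cmod (c j')) * (C * \<sigma>)"
        using Flow[OF that, of c] tau C sig0 unfolding F_def \<sigma>_def[symmetric]
        by (intro sq_lower) auto
      then show ?thesis by (simp add: power_mult_distrib mult_ac)
    qed
    have "(\<Sum>j'<i. (cmod (F (Suc j')))\<^sup>2) \<ge> (\<Sum>j'<i. \<tau>\<^sup>2 * (cmod (c j'))\<^sup>2 - 2 * \<tau> * C * \<sigma> * cmod (c j'))"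
      by (intro sum_mono sq) auto
    also have "(\<Sum>j'<i. \<tau>\<^sup>2 * (cmod (c j'))\<^sup>2 - 2 * \<tau> * C * \<sigma> * cmod (c j')) = \<tau>\<^sup>2 * nc c - 2 * \<tau> * C * \<sigma>\<^sup>2"
      by (simp add: nc_def \<sigma>_def sum_subtractf sum_distrib_left power2_eq_square mult_ac)
    finally have S1: "(\<Sum>j'<i. (cmod (F (Suc j')))\<^sup>2) \<ge> \<tau>\<^sup>2 * nc c - 2 * \<tau> * C * \<sigma>\<^sup>2" .
    have "2 * \<tau> * C * \<sigma>\<^sup>2 \<le> 2 * \<tau> * C * (i * nc c)"
      using tau C sig2 by (intro mult_left_mono) auto
    with S1 have S2: "(\<Sum>j'<i. (cmod (F (Suc j')))\<^sup>2) \<ge> \<tau> * ((\<tau> - 2 * C * i) * nc c)"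
      by (simp add: power2_eq_square algebra_simps)
    have "(\<Sum>m\<in>{1..k}. b m * (cmod (F m))\<^sup>2) \<ge> (\<Sum>m\<in>{1..i}. b m * (cmod (F m))\<^sup>2)"
      using ik bnn by (intro sum_mono2) auto
    moreover have "(\<Sum>m\<in>{1..i}. b m * (cmod (F m))\<^sup>2) \<ge> (\<Sum>m\<in>{1..i}. b i * (cmod (F m))\<^sup>2)"
      using ik by (intro sum_mono mult_right_mono bmono) auto
    moreover have "(\<Sum>m\<in>{1..i}. b i * (cmod (F m))\<^sup>2) = b i * (\<Sum>j'<i. (cmod (F (Suc j')))\<^sup>2)"
      by (simp add: sum_distrib_left sum.atLeast1_atMost_eq)
    moreover have "b i * (\<Sum>j'<i. (cmod (F (Suc j')))\<^sup>2) \<ge> b i * (\<tau> * ((\<tau> - 2 * C * i) * nc c))"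
      using S2 bnn by (intro mult_left_mono) auto
    ultimately have "(\<Sum>m\<in>{1..k}. b m * (cmod (F m))\<^sup>2) \<ge> \<tau> * (b i * (\<tau> - 2 * C * i) * nc c)"
      by (simp add: mult_ac)
    then have Alow: "A_form ip K h \<tau> (fc c) \<ge> b i * (\<tau> - 2 * C * i) * nc c"
      unfolding Aeq F_def[symmetric] using tau by (simp add: field_simps)
    define X where "X = b i * (\<tau> - 2 * C * i) * nc c"
    have X0: "X \<ge> 0" unfolding X_def using bnn big nc0[OF cnz] by auto
    have Np: "L2norm2 \<tau> (fc c) > 0" by (rule Npos[OF cnz])
    have Nu: "L2norm2 \<tau> (fc c) \<le> (\<tau> + C * i) * nc c" using Nbounds[of c] by (simp add: algebra_simps)
    have "b i * (\<tau> - 2 * C * i) / (\<tau> + C * i) = X / ((\<tau> + C * i) * nc c)"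
      unfolding X_def using nc0[OF cnz] by simp
    also have "\<dots> \<le> X / L2norm2 \<tau> (fc c)"
      using X0 Np Nu by (intro divide_left_mono) auto
    also have "\<dots> \<le> A_form ip K h \<tau> (fc c) / L2norm2 \<tau> (fc c)"
      using Alow Np unfolding X_def by (intro divide_right_mono) auto
    finally show "b i * (\<tau> - 2 * C * i) / (\<tau> + C * i) \<le> A_form ip K h \<tau> (\<lambda>s. \<Sum>j<i. c j * (\<lambda>j. ee (- x (Suc j))) j s) / L2norm2 \<tau> (\<lambda>s. \<Sum>j<i. c j * (\<lambda>j. ee (- x (Suc j))) j s)"
      unfolding fc_def g_def .
  qed
qed



lemma lim_ratio: "((\<lambda>\<tau>::real. (\<tau> + p) / (\<tau> + q)) \<longlongrightarrow> 1) at_top"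
proof -
  have inf: "filterlim (\<lambda>\<tau>::real. \<tau> + q) at_infinity at_top"
  proof -
    have "filterlim (\<lambda>\<tau>::real. q + \<tau>) at_top at_top"
      by (rule filterlim_tendsto_add_at_top[OF tendsto_const filterlim_ident])
    then show ?thesis by (intro filterlim_at_top_imp_at_infinity) (simp add: add.commute)
  qed
  have "((\<lambda>\<tau>::real. 1 + (p - q) / (\<tau> + q)) \<longlongrightarrow> 1 + 0) at_top"
    by (intro tendsto_add tendsto_const tendsto_divide_0[OF tendsto_const inf])
  then have l: "((\<lambda>\<tau>::real. 1 + (p - q) / (\<tau> + q)) \<longlongrightarrow> 1) at_top" by simp
  have "eventually (\<lambda>\<tau>::real. 1 + (p - q) / (\<tau> + q) = (\<tau> + p) / (\<tau> + q)) at_top"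
    using eventually_gt_at_top[of "- q"] by eventually_elim (simp add: field_simps)
  then show ?thesis by (rule Lim_transform_eventually[OF l])
qed



theorem proposition2:
  fixes sc :: "complex \<Rightarrow> 'h::ab_group_add \<Rightarrow> 'h"
    and ip :: "'h \<Rightarrow> 'h \<Rightarrow> complex"
    and K :: "real \<Rightarrow> 'h \<Rightarrow> 'h"
    and k :: nat
    and x :: "nat \<Rightarrow> real"
    and v :: "nat \<Rightarrow> 'h"
    and a :: "nat \<Rightarrow> complex"
    and h :: 'h
  assumes "complex_hilbert_space sc ip"
    and "sc_isometry_semigroup sc ip K"
    and "inj_on x {1..k}"
    and "\<forall>j\<in>{1..k}. \<forall>l\<in>{1..k}. ip (v j) (v l) = (if j = l then 1 else 0)"
    and "\<forall>j\<in>{1..k}. \<forall>s\<ge>0. K s (v j) = sc (exp (\<i> * complex_of_real (s * x j))) (v j)"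
    and "h = (\<Sum>j\<in>{1..k}. sc (a j) (v j))"
    and "\<forall>j\<in>{1..k}. \<forall>l\<in>{1..k}. j \<le> l \<longrightarrow> cmod (a l) \<le> cmod (a j)"
  shows "\<forall>i\<in>{1..k}. ((\<lambda>\<tau>. eigval ip K h \<tau> i) \<longlongrightarrow> (cmod (a i))\<^sup>2) at_top"
proof
  fix i assume i: "i \<in> {1..k}"
  define b where "b m = (cmod (a m))\<^sup>2" for m
  have kern: "ip (K s h) (K t h) = (\<Sum>m\<in>{1..k}. of_real (b m) * (ee (x m) s * cnj (ee (x m) t)))"
    if "s \<ge> 0" "t \<ge> 0" for s t
    unfolding b_def by (rule kernel[OF assms(1,2) finite_atLeastAtMost assms(4,5,6) that])
  define C where "C = (\<Sum>m\<in>{1..k}. \<Sum>l\<in>{1..k}. if m = l then 0 else 2 / \<bar>x m - x l\<bar>)"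
  have C0: "C \<ge> 0" unfolding C_def by (intro sum_nonneg) auto
  have Cb: "cmod (integral\<^sup>L (MM \<tau>) (ee (x l - x m))) \<le> C"
    if tau: "\<tau> \<ge> 0" and ml: "m \<in> {1..k}" "l \<in> {1..k}" "m \<noteq> l" for \<tau> m l
  proof -
    have "x l \<noteq> x m"
    proof
      assume "x l = x m"
      then have "l = m" by (rule inj_onD[OF assms(3) _ ml(2) ml(1)])
      with ml(3) show False by simp
    qed
    then have ne: "x l - x m \<noteq> 0" by simp
    have "cmod (integral\<^sup>L (MM \<tau>) (ee (x l - x m))) \<le> 2 / \<bar>x l - x m\<bar>"
      by (rule ee_int_bound[OF ne tau])
    also have "\<dots> = (if l = m then 0 else 2 / \<bar>x l - x m\<bar>)" using ml by simp
    also have "\<dots> \<le> (\<Sum>m'\<in>{1..k}. if l = m' then 0 else 2 / \<bar>x l - x m'\<bar>)"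
      using ml by (intro member_le_sum) auto
    also have "\<dots> \<le> C" unfolding C_def
      using ml by (intro member_le_sum[where f="\<lambda>l. \<Sum>m'\<in>{1..k}. if l = m' then 0 else 2 / \<bar>x l - x m'\<bar>"] sum_nonneg) auto
    finally show ?thesis .
  qed
  have bmono: "b l \<le> b m" if "m \<in> {1..k}" "l \<in> {1..k}" "m \<le> l" for m l
    unfolding b_def using assms(7) that by (intro power_mono) auto
  have bnn: "b m \<ge> 0" for m unfolding b_def by simp
  define Lo where "Lo \<tau> = b i * ((\<tau> + (- 2 * C * i)) / (\<tau> + C * i))" for \<tau>
  define Up where "Up \<tau> = b i * ((\<tau> + C * k) / (\<tau> + 0))" for \<tau>
  have bounds: "Lo \<tau> \<le> eigval ip K h \<tau> i \<and> eigval ip K h \<tau> i \<le> Up \<tau>" if big: "\<tau> > 2 * C * i + 1" for \<tau>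
  proof -
    have ci: "0 \<le> C * real i" using C0 by simp
    have tau: "\<tau> > 0" using big ci by linarith
    have big': "\<tau> > 2 * C * i" using big by linarith
    define S where "S = { (INF c \<in> {c :: nat \<Rightarrow> complex. \<exists>j<i. c j \<noteq> 0}.
              A_form ip K h \<tau> (\<lambda>s. \<Sum>j<i. c j * g j s) / L2norm2 \<tau> (\<lambda>s. \<Sum>j<i. c j * g j s))
          | g :: nat \<Rightarrow> real \<Rightarrow> complex.
              (\<forall>j<i. L2 \<tau> (g j)) \<and>
              (\<forall>c :: nat \<Rightarrow> complex. L2norm2 \<tau> (\<lambda>s. \<Sum>j<i. c j * g j s) = 0 \<longrightarrow> (\<forall>j<i. c j = 0)) }"
    have eig: "eigval ip K h \<tau> i = Sup S" unfolding eigval_def S_def ..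
    define g0 where "g0 = (\<lambda>j. ee (- x (Suc j)))"
    define y0 where "y0 = (INF c \<in> {c :: nat \<Rightarrow> complex. \<exists>j<i. c j \<noteq> 0}.
              A_form ip K h \<tau> (\<lambda>s. \<Sum>j<i. c j * g0 j s) / L2norm2 \<tau> (\<lambda>s. \<Sum>j<i. c j * g0 j s))"
    have tau0: "\<tau> \<ge> 0" using tau by simp
    have LV1: "\<forall>j<i. L2 \<tau> (g0 j)" unfolding g0_def
      by (rule lower_val(1)[where b=b and x=x and ip=ip and K=K and h=h, OF tau C0 i kern]) (use big' bnn tau0 in \<open>auto intro: Cb bmono\<close>)
    have LV2: "\<forall>c :: nat \<Rightarrow> complex. L2norm2 \<tau> (\<lambda>s. \<Sum>j<i. c j * g0 j s) = 0 \<longrightarrow> (\<forall>j<i. c j = 0)" unfolding g0_def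
      by (rule lower_val(2)[where b=b and x=x and ip=ip and K=K and h=h, OF tau C0 i kern]) (use big' bnn tau0 in \<open>auto intro: Cb bmono\<close>)
    have LV3: "b i * (\<tau> - 2 * C * i) / (\<tau> + C * i) \<le> y0" unfolding g0_def y0_def
      by (rule lower_val(3)[where b=b and x=x and ip=ip and K=K and h=h, OF tau C0 i kern]) (use big' bnn tau0 in \<open>auto intro: Cb bmono\<close>)
    have y0S: "y0 \<in> S" unfolding S_def y0_def using LV1 LV2 by blast
    have upS: "y \<le> Up \<tau>" if "y \<in> S" for y
    proof -
      obtain g where y: "y = (INF c \<in> {c :: nat \<Rightarrow> complex. \<exists>j<i. c j \<noteq> 0}.
              A_form ip K h \<tau> (\<lambda>s. \<Sum>j<i. c j * g j s) / L2norm2 \<tau> (\<lambda>s. \<Sum>j<i. c j * g j s))"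
        and g1: "\<forall>j<i. L2 \<tau> (g j)"
        and g2: "\<forall>c :: nat \<Rightarrow> complex. L2norm2 \<tau> (\<lambda>s. \<Sum>j<i. c j * g j s) = 0 \<longrightarrow> (\<forall>j<i. c j = 0)"
        using \<open>y \<in> S\<close> unfolding S_def by blast
      have "y \<le> b i * (\<tau> + C * k) / \<tau>"
        unfolding y by (rule upper_val(2)[where b=b and x=x and ip=ip and K=K and h=h, OF tau C0 i kern]) (use g1 g2 bnn tau0 in \<open>auto intro: Cb bmono\<close>)
      then show ?thesis unfolding Up_def by simp
    qed
    have bdd: "bdd_above S" unfolding bdd_above_def using upS by blast
    have "Lo \<tau> \<le> y0" unfolding Lo_def using LV3 by (simp add: algebra_simps)
    also have "y0 \<le> Sup S" by (rule cSup_upper[OF y0S bdd])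
    finally have 1: "Lo \<tau> \<le> eigval ip K h \<tau> i" unfolding eig .
    have "Sup S \<le> Up \<tau>" using y0S upS by (intro cSup_least) auto
    then show ?thesis using 1 eig by simp
  qed
  have lLo: "(Lo \<longlongrightarrow> b i * 1) at_top" unfolding Lo_def by (intro tendsto_mult tendsto_const lim_ratio)
  have lUp: "(Up \<longlongrightarrow> b i * 1) at_top" unfolding Up_def by (intro tendsto_mult tendsto_const lim_ratio)
  have ev: "eventually (\<lambda>\<tau>. \<tau> > 2 * C * i + 1) at_top" by (rule eventually_gt_at_top)
  have "((\<lambda>\<tau>. eigval ip K h \<tau> i) \<longlongrightarrow> b i * 1) at_top"
  proof (rule tendsto_sandwich[OF _ _ lLo lUp])
    show "eventually (\<lambda>\<tau>. Lo \<tau> \<le> eigval ip K h \<tau> i) at_top" using ev by eventually_elim (use bounds in blast)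
    show "eventually (\<lambda>\<tau>. eigval ip K h \<tau> i \<le> Up \<tau>) at_top" using ev by eventually_elim (use bounds in blast)
  qed
  then show "((\<lambda>\<tau>. eigval ip K h \<tau> i) \<longlongrightarrow> (cmod (a i))\<^sup>2) at_top" by (simp add: b_def)
qed


end
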